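(* For $n\in\mathbb{N}$, let $G_n$ be the sink parity game with player 0 vertices $a_1,\dots,a_n$, player 1 vertices $b_1,\dots,b_{n+1}$ and sink $\top$, with priorities $\pi(a_i)=2i+1$ and $\pi(b_i)=2i+2$, and write $a_{n+1}:=\top$. For every $i\in[n]$, $a_i$ has an edge to $a_{i+1}$ with Bland number $2i-1$ and an edge to $b_{i+1}$ with Bland number $2i$, and $b_i$ has edges to $b_{i+1}$ and to $a_{i+1}$; $b_{n+1}$ has a single edge to $\top$, and $\top$ has its self-loop. Let $\sigma_0$ be the player 0 strategy with $\sigma_0(a_i)=a_{i+1}$ for all $i\in[n]$. Then strategy improvement with Bland's rule, started at $\sigma_0$, takes $2^n-1$ iterations to solve $G_n$. Moreover, the order of the valuations of $a_1$ and $b_1$ changes in every iteration (i.e. between any two consecutive strategies of the run, which of $\mathrm{val}(a_1)$, $\mathrm{val}(b_1)$ is larger with respect to $\triangleleft$ switches).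
   Context: A sink parity game is a tuple $(V_0,V_1,E,\pi)$ specifying a directed graph on $V_G=V_0\cup V_1\cup\{\top\}$ in which every vertex has an outgoing edge, the sink $\top$ has only the self-loop as outgoing edge, and $\pi:V_G\to\mathbb{Z}\cup\{-\infty\}$ is a priority function with $\pi(\top)=-\infty$ (only at $\top$). Player $i$ owns $V_i$; player 0 edges are edges leaving $V_0$. A player-$i$ strategy is a map $\sigma:V_i\to V_G$ along edges; $E_\sigma$ consists of the edges $(v,\sigma(v))$, $v\in V_i$, and all edges leaving vertices not in $V_i$. A player 0 strategy is admissible if every cycle of $E_\sigma$ not containing $\top$ has even highest priority. For finite multisets $S_1,S_2$ of integers, $S_1\triangleleft S_2$ means $\sum_{s\in S_1}(-|V_0\cup V_1|)^s<\sum_{s\in S_2}(-|V_0\cup V_1|)^s$ (with multiplicity). For admissible $\sigma$, with $\bar\sigma$ an optimal (valuation-minimizing) counterstrategy of player 1, the play from $v_0$ is a simple path $v_0,\dots,v_k,\top$ and $\mathrm{val}_\sigma(v_0)=\{\pi(v_0),\dots,\pi(v_k)\}$ (multiset). A player 0 edge $(v,w)$ is an improving switch for $\sigma$ if $\mathrm{val}_\sigma(w)\triangleright\mathrm{val}_\sigma(\sigma(v))$; applying it redirects $v$ to $w$. Strategy improvement repeatedly applies one improving switch until none exists (optimal strategy); each application is one iteration. Bland's rule applies the improving switch with the smallest Bland number. *)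

theory Defs
  imports Complex_Main "HOL-Library.Multiset"
begin

record 'v spg =
  V0 :: "'v set"
  V1 :: "'v set"
  sink :: 'v
  edges :: "('v \<times> 'v) set"
  prio :: "'v \<Rightarrow> int"   (* the priority of the sink (-infinity) is never used *)

definition strategy0 :: "('v, 'm) spg_scheme \<Rightarrow> ('v \<Rightarrow> 'v) \<Rightarrow> bool" where
  "strategy0 G \<sigma> \<longleftrightarrow> (\<forall>v\<in>V0 G. (v, \<sigma> v) \<in> edges G)"

definition strategy1 :: "('v, 'm) spg_scheme \<Rightarrow> ('v \<Rightarrow> 'v) \<Rightarrow> bool" where
  "strategy1 G \<tau> \<longleftrightarrow> (\<forall>v\<in>V1 G. (v, \<tau> v) \<in> edges G)"

definition E_sigma :: "('v, 'm) spg_scheme \<Rightarrow> ('v \<Rightarrow> 'v) \<Rightarrow> ('v \<times> 'v) set" where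
  "E_sigma G \<sigma> = {(v, w) \<in> edges G. v \<in> V0 G \<longrightarrow> w = \<sigma> v}"

definition admissible :: "('v, 'm) spg_scheme \<Rightarrow> ('v \<Rightarrow> 'v) \<Rightarrow> bool" where
  "admissible G \<sigma> \<longleftrightarrow> strategy0 G \<sigma> \<and>
     (\<forall>xs. xs \<noteq> [] \<and> (\<forall>i<length xs. (xs ! i, xs ! (Suc i mod length xs)) \<in> E_sigma G \<sigma>)
            \<and> sink G \<notin> set xs \<longrightarrow> even (Max (prio G ` set xs)))"

definition step :: "('v, 'm) spg_scheme \<Rightarrow> ('v \<Rightarrow> 'v) \<Rightarrow> ('v \<Rightarrow> 'v) \<Rightarrow> 'v \<Rightarrow> 'v" where
  "step G \<sigma> \<tau> v = (if v \<in> V0 G then \<sigma> v else if v \<in> V1 G then \<tau> v else sink G)"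

definition reaches_sink :: "('v, 'm) spg_scheme \<Rightarrow> ('v \<Rightarrow> 'v) \<Rightarrow> ('v \<Rightarrow> 'v) \<Rightarrow> 'v \<Rightarrow> bool" where
  "reaches_sink G \<sigma> \<tau> v \<longleftrightarrow> (\<exists>k. (step G \<sigma> \<tau> ^^ k) v = sink G)"

definition play_val :: "('v, 'm) spg_scheme \<Rightarrow> ('v \<Rightarrow> 'v) \<Rightarrow> ('v \<Rightarrow> 'v) \<Rightarrow> 'v \<Rightarrow> int multiset" where
  "play_val G \<sigma> \<tau> v =
     (let k = (LEAST k. (step G \<sigma> \<tau> ^^ k) v = sink G)
      in mset (map (\<lambda>i. prio G ((step G \<sigma> \<tau> ^^ i) v)) [0..<k]))"

definition weight :: "('v, 'm) spg_scheme \<Rightarrow> int multiset \<Rightarrow> real" where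
  "weight G S = sum_mset (image_mset (\<lambda>s. (- real (card (V0 G \<union> V1 G))) powi s) S)"

definition mless :: "('v, 'm) spg_scheme \<Rightarrow> int multiset \<Rightarrow> int multiset \<Rightarrow> bool" where
  "mless G S1 S2 \<longleftrightarrow> weight G S1 < weight G S2"

definition counter_plays :: "('v, 'm) spg_scheme \<Rightarrow> ('v \<Rightarrow> 'v) \<Rightarrow> 'v \<Rightarrow> int multiset set" where
  "counter_plays G \<sigma> v = {play_val G \<sigma> \<tau> v | \<tau>. strategy1 G \<tau> \<and> reaches_sink G \<sigma> \<tau> v}"

definition val :: "('v, 'm) spg_scheme \<Rightarrow> ('v \<Rightarrow> 'v) \<Rightarrow> 'v \<Rightarrow> int multiset" where
  "val G \<sigma> v = (SOME S. S \<in> counter_plays G \<sigma> v \<and> (\<forall>S'\<in>counter_plays G \<sigma> v. \<not> mless G S' S))"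

definition improving_switch :: "('v, 'm) spg_scheme \<Rightarrow> ('v \<Rightarrow> 'v) \<Rightarrow> 'v \<Rightarrow> 'v \<Rightarrow> bool" where
  "improving_switch G \<sigma> v w \<longleftrightarrow> admissible G \<sigma> \<and> v \<in> V0 G \<and> (v, w) \<in> edges G \<and>
     mless G (val G \<sigma> (\<sigma> v)) (val G \<sigma> w)"

definition optimal :: "('v, 'm) spg_scheme \<Rightarrow> ('v \<Rightarrow> 'v) \<Rightarrow> bool" where
  "optimal G \<sigma> \<longleftrightarrow> \<not> (\<exists>v w. improving_switch G \<sigma> v w)"

definition bland_step :: "('v, 'm) spg_scheme \<Rightarrow> ('v \<times> 'v \<Rightarrow> nat) \<Rightarrow> ('v \<Rightarrow> 'v) \<Rightarrow> ('v \<Rightarrow> 'v) \<Rightarrow> bool" where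
  "bland_step G bl \<sigma> \<sigma>' \<longleftrightarrow>
     (\<exists>v w. improving_switch G \<sigma> v w \<and>
        (\<forall>v' w'. improving_switch G \<sigma> v' w' \<longrightarrow> bl (v, w) \<le> bl (v', w')) \<and>
        \<sigma>' = \<sigma>(v := w))"

definition bland_run :: "('v, 'm) spg_scheme \<Rightarrow> ('v \<times> 'v \<Rightarrow> nat) \<Rightarrow> ('v \<Rightarrow> 'v) \<Rightarrow> nat
    \<Rightarrow> (nat \<Rightarrow> 'v \<Rightarrow> 'v) \<Rightarrow> bool" where
  "bland_run G bl \<sigma>0 m \<sigma>s \<longleftrightarrow> \<sigma>s 0 = \<sigma>0 \<and> (\<forall>k\<le>m. admissible G (\<sigma>s k)) \<and>
     (\<forall>k<m. bland_step G bl (\<sigma>s k) (\<sigma>s (Suc k))) \<and> optimal G (\<sigma>s m)"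

datatype vtx = A nat | B nat | Top

definition an :: "nat \<Rightarrow> nat \<Rightarrow> vtx" where
  "an n i = (if i = Suc n then Top else A i)"

definition Gn :: "nat \<Rightarrow> vtx spg" where
  "Gn n = \<lparr> V0 = A ` {1..n}, V1 = B ` {1..Suc n}, sink = Top,
     edges = (\<Union>i\<in>{1..n}. {(A i, an n (Suc i)), (A i, B (Suc i)),
                            (B i, B (Suc i)), (B i, an n (Suc i))})
             \<union> {(B (Suc n), Top), (Top, Top)},
     prio = (\<lambda>v. case v of A i \<Rightarrow> 2 * int i + 1 | B i \<Rightarrow> 2 * int i + 2 | Top \<Rightarrow> 0) \<rparr>"

definition blandn :: "nat \<Rightarrow> vtx \<times> vtx \<Rightarrow> nat" where
  "blandn n e = (case e of (A i, w) \<Rightarrow> if w = B (Suc i) then 2 * i else 2 * i - 1 | _ \<Rightarrow> 0)"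

definition sigma0 :: "nat \<Rightarrow> vtx \<Rightarrow> vtx" where
  "sigma0 n v = (case v of A i \<Rightarrow> an n (Suc i) | _ \<Rightarrow> Top)"

end

theory Submission
  imports Defs
begin

lemma play_sink:
  "reaches_sink G \<sigma> \<tau> (sink G) \<and> play_val G \<sigma> \<tau> (sink G) = {#}"
  unfolding reaches_sink_def play_val_def
  by (auto intro: exI[of _ 0] simp: Least_eq_0)

lemma play_rec:
  assumes "v \<noteq> sink G" "reaches_sink G \<sigma> \<tau> (step G \<sigma> \<tau> v)"
  shows "reaches_sink G \<sigma> \<tau> v \<and>
    play_val G \<sigma> \<tau> v = add_mset (prio G v) (play_val G \<sigma> \<tau> (step G \<sigma> \<tau> v))"
proof -
  let ?f = "step G \<sigma> \<tau>"
  obtain k where k: "(?f ^^ k) (?f v) = sink G" using assms(2) unfolding reaches_sink_def by blast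
  have fs: "\<And>m. (?f ^^ Suc m) v = (?f ^^ m) (?f v)" by (simp add: funpow_Suc_right del: funpow.simps)
  have r: "reaches_sink G \<sigma> \<tau> v" unfolding reaches_sink_def using k fs by metis
  have L: "(LEAST k. (?f ^^ k) v = sink G) = Suc (LEAST m. (?f ^^ m) (?f v) = sink G)"
    using Least_Suc[of "\<lambda>k. (?f ^^ k) v = sink G" "Suc k"] k fs assms(1) by simp
  show ?thesis using r unfolding play_val_def Let_def L
    by (simp only: map_upt_Suc fs) (simp)
qed

lemma edgesA: "(A i, w) \<in> edges (Gn n) \<longleftrightarrow> 1 \<le> i \<and> i \<le> n \<and> (w = an n (Suc i) \<or> w = B (Suc i))"
  by (auto simp: Gn_def an_def)
lemma edgesB: "(B i, w) \<in> edges (Gn n) \<longleftrightarrow>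
   (1 \<le> i \<and> i \<le> n \<and> (w = B (Suc i) \<or> w = an n (Suc i))) \<or> (i = Suc n \<and> w = Top)"
  by (auto simp: Gn_def an_def)
lemma edgesT: "(Top, w) \<in> edges (Gn n) \<longleftrightarrow> w = Top"
  by (auto simp: Gn_def an_def)

lemma an_neq[simp]: "an n i \<noteq> B j" "B j \<noteq> an n i" by (auto simp: an_def)

lemma card_Gn: "card (V0 (Gn n) \<union> V1 (Gn n)) = 2 * n + 1"
proof -
  have "card (A ` {1..n} \<union> B ` {1..Suc n}) = card (A ` {1..n}) + card (B ` {1..Suc n})"
    by (rule card_Un_disjoint) auto
  also have "\<dots> = n + Suc n" by (simp add: card_image inj_on_def)
  finally show ?thesis by (simp add: Gn_def)
qed

definition xx :: "nat \<Rightarrow> real" where "xx n = - real (2 * n + 1)"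

lemma weight_empty: "weight G {#} = 0" by (simp add: weight_def)
lemma weight_add: "weight (Gn n) (add_mset p M) = xx n powi p + weight (Gn n) M"
  by (simp add: weight_def card_Gn xx_def)

lemma prioA: "prio (Gn n) (A i) = int (2 * i + 1)" by (simp add: Gn_def)
lemma prioB: "prio (Gn n) (B i) = int (2 * i + 2)" by (simp add: Gn_def)
lemma weight_addA: "weight (Gn n) (add_mset (prio (Gn n) (A i)) M) = xx n ^ (2 * i + 1) + weight (Gn n) M"
  unfolding weight_add prioA power_int_of_nat ..
lemma weight_addB: "weight (Gn n) (add_mset (prio (Gn n) (B i)) M) = xx n ^ (2 * i + 2) + weight (Gn n) M"
  unfolding weight_add prioB power_int_of_nat ..
lemma sinkG[simp]: "sink (Gn n) = Top" by (simp add: Gn_def)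
lemma stepA: "1 \<le> i \<Longrightarrow> i \<le> n \<Longrightarrow> step (Gn n) \<sigma> \<tau> (A i) = \<sigma> (A i)"
  by (simp add: step_def Gn_def)
lemma stepB: "1 \<le> i \<Longrightarrow> i \<le> Suc n \<Longrightarrow> step (Gn n) \<sigma> \<tau> (B i) = \<tau> (B i)"
  by (auto simp: step_def Gn_def)

definition rk :: "vtx \<Rightarrow> nat" where "rk v = (case v of A i \<Rightarrow> i | B i \<Rightarrow> i | Top \<Rightarrow> 0)"

lemma edge_rk: "(v, w) \<in> edges (Gn n) \<Longrightarrow> v \<noteq> Top \<Longrightarrow> w \<noteq> Top \<Longrightarrow> rk w = Suc (rk v)"
  by (cases v) (auto simp: edgesA edgesB edgesT rk_def an_def split: if_splits)

lemma admissible_Gn: "strategy0 (Gn n) \<sigma> \<Longrightarrow> admissible (Gn n) \<sigma>"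
  unfolding admissible_def
proof (intro conjI allI impI, assumption)
  fix xs assume H: "xs \<noteq> [] \<and> (\<forall>i<length xs. (xs ! i, xs ! (Suc i mod length xs)) \<in> E_sigma (Gn n) \<sigma>) \<and>
        sink (Gn n) \<notin> set xs"
  have fin: "finite (rk ` set xs)" "rk ` set xs \<noteq> {}" using H by auto
  obtain v where v: "v \<in> set xs" "rk v = Max (rk ` set xs)"
    using Max_in[OF fin] by auto
  then obtain i where i: "i < length xs" "xs ! i = v" by (auto simp: in_set_conv_nth)
  have e: "(xs ! i, xs ! (Suc i mod length xs)) \<in> edges (Gn n)"
    using H i(1) by (auto simp: E_sigma_def)
  have m: "Suc i mod length xs < length xs" using H by simp
  have inx: "xs ! (Suc i mod length xs) \<in> set xs" using m by simp
  have "Top \<noteq> xs ! (Suc i mod length xs)" using H inx by (metis sinkG)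
  moreover have "Top \<noteq> v" using H v by (metis sinkG)
  ultimately have "rk (xs ! (Suc i mod length xs)) = Suc (rk v)" using edge_rk[OF e] i by auto
  moreover have "rk (xs ! (Suc i mod length xs)) \<le> Max (rk ` set xs)"
    using fin m by simp
  ultimately show "even (Max (prio (Gn n) ` set xs))" using v by simp
qed


lemma down_induct[consumes 2, case_names top step]:
  assumes "1 \<le> i" "i \<le> Suc n" "P (Suc n)" "\<And>i. 1 \<le> i \<Longrightarrow> i \<le> n \<Longrightarrow> P (Suc i) \<Longrightarrow> P i"
  shows "P i"
proof -
  have "\<And>i. d = Suc n - i \<Longrightarrow> 1 \<le> i \<Longrightarrow> i \<le> Suc n \<Longrightarrow> P i" for d
  proof (induction d)
    case 0 then show ?case using assms(3) by (metis diff_is_0_eq le_antisym)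
  next
    case (Suc d) then show ?case using assms(4)[of i] Suc.IH[of "Suc i"] by simp
  qed
  thus ?thesis using assms by blast
qed

function L :: "real \<Rightarrow> nat \<Rightarrow> (vtx \<Rightarrow> vtx) \<Rightarrow> nat \<Rightarrow> real \<times> real" where
  "L x n \<sigma> i = (if n < i then (0, x ^ (2 * n + 4)) else
     (x ^ (2 * i + 1) + (if \<sigma> (A i) = B (Suc i) then snd (L x n \<sigma> (Suc i)) else fst (L x n \<sigma> (Suc i))),
      x ^ (2 * i + 2) + min (fst (L x n \<sigma> (Suc i))) (snd (L x n \<sigma> (Suc i)))))"
  by pat_completeness auto
termination by (relation "measure (\<lambda>(x, n, \<sigma>, i). Suc n - i)") auto

declare L.simps[simp del]

lemma L_top: "n < i \<Longrightarrow> L x n \<sigma> i = (0, x ^ (2 * n + 4))" by (simp add: L.simps)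
lemma L_step: "i \<le> n \<Longrightarrow> L x n \<sigma> i =
     (x ^ (2 * i + 1) + (if \<sigma> (A i) = B (Suc i) then snd (L x n \<sigma> (Suc i)) else fst (L x n \<sigma> (Suc i))),
      x ^ (2 * i + 2) + min (fst (L x n \<sigma> (Suc i))) (snd (L x n \<sigma> (Suc i))))"
  by (subst L.simps) simp

function cb :: "nat \<Rightarrow> (vtx \<Rightarrow> vtx) \<Rightarrow> nat \<Rightarrow> bool" where
  "cb n \<sigma> i = (if n < i then False else ((\<sigma> (A i) = B (Suc i)) \<noteq> cb n \<sigma> (Suc i)))"
  by pat_completeness auto
termination by (relation "measure (\<lambda>(n, \<sigma>, i). Suc n - i)") auto

declare cb.simps[simp del]
lemma cb_top: "n < i \<Longrightarrow> cb n \<sigma> i = False" by (simp add: cb.simps)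
lemma cb_step: "i \<le> n \<Longrightarrow> cb n \<sigma> i = ((\<sigma> (A i) = B (Suc i)) \<noteq> cb n \<sigma> (Suc i))"
  by (subst cb.simps) simp

definition good :: "nat \<Rightarrow> (vtx \<Rightarrow> vtx) \<Rightarrow> bool" where
  "good n \<sigma> \<longleftrightarrow> (\<forall>i. 1 \<le> i \<and> i \<le> n \<longrightarrow> \<sigma> (A i) = an n (Suc i) \<or> \<sigma> (A i) = B (Suc i))"

lemma an_Suc_n[simp]: "an n (Suc n) = Top" by (simp add: an_def)
lemma an_le[simp]: "i \<le> n \<Longrightarrow> an n i = A i" by (simp add: an_def)

lemma tau_B: assumes "strategy1 (Gn n) \<tau>" "1 \<le> i" "i \<le> n"
  shows "\<tau> (B i) = B (Suc i) \<or> \<tau> (B i) = an n (Suc i)"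
proof -
  have "B i \<in> V1 (Gn n)" using assms by (simp add: Gn_def)
  thus ?thesis using assms by (auto simp: strategy1_def edgesB)
qed
lemma tau_Btop: assumes "strategy1 (Gn n) \<tau>" shows "\<tau> (B (Suc n)) = Top"
proof -
  have "B (Suc n) \<in> V1 (Gn n)" by (simp add: Gn_def)
  thus ?thesis using assms by (auto simp: strategy1_def edgesB)
qed

lemma plays_ge:
  assumes g: "good n \<sigma>" and t: "strategy1 (Gn n) \<tau>" and i: "1 \<le> i" "i \<le> Suc n"
  shows "reaches_sink (Gn n) \<sigma> \<tau> (an n i) \<and> weight (Gn n) (play_val (Gn n) \<sigma> \<tau> (an n i)) \<ge> fst (L (xx n) n \<sigma> i)
     \<and> reaches_sink (Gn n) \<sigma> \<tau> (B i) \<and> weight (Gn n) (play_val (Gn n) \<sigma> \<tau> (B i)) \<ge> snd (L (xx n) n \<sigma> i)"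
  using i
proof (induction i rule: down_induct)
  case top
  have s: "reaches_sink (Gn n) \<sigma> \<tau> Top" "play_val (Gn n) \<sigma> \<tau> Top = {#}" using play_sink[of "Gn n"] by auto
  have st: "step (Gn n) \<sigma> \<tau> (B (Suc n)) = Top" using stepB[of "Suc n" n] tau_Btop[OF t] by simp
  have "reaches_sink (Gn n) \<sigma> \<tau> (B (Suc n)) \<and> play_val (Gn n) \<sigma> \<tau> (B (Suc n)) = add_mset (prio (Gn n) (B (Suc n))) {#}"
    using play_rec[of "B (Suc n)" "Gn n" \<sigma> \<tau>] st s by simp
  hence "weight (Gn n) (play_val (Gn n) \<sigma> \<tau> (B (Suc n))) = xx n ^ (2 * Suc n + 2)"
    by (simp only: weight_addB weight_empty add_0_right)
  also have "\<dots> = xx n ^ (2 * n + 4)" by (rule arg_cong[where f="\<lambda>k. xx n ^ k"]) simp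
  finally show ?case using s \<open>reaches_sink _ _ _ (B (Suc n)) \<and> _\<close> by (simp add: L_top weight_empty)
next
  case (step i)
  note IH = step.IH
  have stA: "step (Gn n) \<sigma> \<tau> (A i) = \<sigma> (A i)" using step stepA by simp
  have stB: "step (Gn n) \<sigma> \<tau> (B i) = \<tau> (B i)" using step stepB by simp
  have gA: "\<sigma> (A i) = an n (Suc i) \<or> \<sigma> (A i) = B (Suc i)" using g step by (simp add: good_def)
  have gB: "\<tau> (B i) = B (Suc i) \<or> \<tau> (B i) = an n (Suc i)" using tau_B[OF t] step by simp
  have rA: "reaches_sink (Gn n) \<sigma> \<tau> (A i) \<and> play_val (Gn n) \<sigma> \<tau> (A i) = add_mset (prio (Gn n) (A i)) (play_val (Gn n) \<sigma> \<tau> (\<sigma> (A i)))"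
    using play_rec[of "A i" "Gn n" \<sigma> \<tau>] stA gA IH by auto
  have rB: "reaches_sink (Gn n) \<sigma> \<tau> (B i) \<and> play_val (Gn n) \<sigma> \<tau> (B i) = add_mset (prio (Gn n) (B i)) (play_val (Gn n) \<sigma> \<tau> (\<tau> (B i)))"
    using play_rec[of "B i" "Gn n" \<sigma> \<tau>] stB gB IH by auto
  have wA: "weight (Gn n) (play_val (Gn n) \<sigma> \<tau> (A i)) \<ge> fst (L (xx n) n \<sigma> i)"
    using rA gA IH step by (auto simp: L_step weight_addA)
  have wB: "weight (Gn n) (play_val (Gn n) \<sigma> \<tau> (B i)) \<ge> snd (L (xx n) n \<sigma> i)"
    using rB gB IH step by (auto simp: L_step weight_addB)
  show ?case using rA rB wA wB step by simp
qed

definition tstar :: "nat \<Rightarrow> (vtx \<Rightarrow> vtx) \<Rightarrow> vtx \<Rightarrow> vtx" where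
  "tstar n \<sigma> v = (case v of B i \<Rightarrow> if i \<le> n then (if fst (L (xx n) n \<sigma> (Suc i)) < snd (L (xx n) n \<sigma> (Suc i))
        then an n (Suc i) else B (Suc i)) else Top | _ \<Rightarrow> Top)"

lemma tstar_str: "strategy1 (Gn n) (tstar n \<sigma>)"
  by (auto simp: strategy1_def Gn_def tstar_def edgesB[simplified Gn_def, simplified])

lemma plays_eq:
  assumes g: "good n \<sigma>" and i: "1 \<le> i" "i \<le> Suc n"
  shows "weight (Gn n) (play_val (Gn n) \<sigma> (tstar n \<sigma>) (an n i)) = fst (L (xx n) n \<sigma> i)
     \<and> weight (Gn n) (play_val (Gn n) \<sigma> (tstar n \<sigma>) (B i)) = snd (L (xx n) n \<sigma> i)"
  using i
proof (induction i rule: down_induct)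
  case top
  let ?\<tau> = "tstar n \<sigma>"
  have s: "reaches_sink (Gn n) \<sigma> ?\<tau> Top" "play_val (Gn n) \<sigma> ?\<tau> Top = {#}" using play_sink[of "Gn n"] by auto
  have st: "step (Gn n) \<sigma> ?\<tau> (B (Suc n)) = Top" using stepB[of "Suc n" n] by (simp add: tstar_def)
  have "play_val (Gn n) \<sigma> ?\<tau> (B (Suc n)) = add_mset (prio (Gn n) (B (Suc n))) {#}"
    using play_rec[of "B (Suc n)" "Gn n" \<sigma> ?\<tau>] st s by simp
  hence "weight (Gn n) (play_val (Gn n) \<sigma> ?\<tau> (B (Suc n))) = xx n ^ (2 * Suc n + 2)"
    by (simp only: weight_addB weight_empty add_0_right)
  also have "\<dots> = xx n ^ (2 * n + 4)" by (rule arg_cong[where f="\<lambda>k. xx n ^ k"]) simp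
  finally show ?case using s by (simp add: L_top weight_empty)
next
  case (step i)
  let ?\<tau> = "tstar n \<sigma>"
  note IH = step.IH
  have R: "reaches_sink (Gn n) \<sigma> ?\<tau> (an n (Suc i))" "reaches_sink (Gn n) \<sigma> ?\<tau> (B (Suc i))"
    using plays_ge[OF g tstar_str, of "Suc i"] step by auto
  have stA: "step (Gn n) \<sigma> ?\<tau> (A i) = \<sigma> (A i)" using step stepA by simp
  have stB: "step (Gn n) \<sigma> ?\<tau> (B i) = ?\<tau> (B i)" using step stepB by simp
  have gA: "\<sigma> (A i) = an n (Suc i) \<or> \<sigma> (A i) = B (Suc i)" using g step by (simp add: good_def)
  have rA: "play_val (Gn n) \<sigma> ?\<tau> (A i) = add_mset (prio (Gn n) (A i)) (play_val (Gn n) \<sigma> ?\<tau> (\<sigma> (A i)))"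
    using play_rec[of "A i" "Gn n" \<sigma> ?\<tau>] stA gA R by auto
  have tB: "?\<tau> (B i) = (if fst (L (xx n) n \<sigma> (Suc i)) < snd (L (xx n) n \<sigma> (Suc i))
        then an n (Suc i) else B (Suc i))" using step by (simp add: tstar_def)
  have rB: "play_val (Gn n) \<sigma> ?\<tau> (B i) = add_mset (prio (Gn n) (B i)) (play_val (Gn n) \<sigma> ?\<tau> (?\<tau> (B i)))"
    using play_rec[of "B i" "Gn n" \<sigma> ?\<tau>] stB R tB by auto
  have wA: "weight (Gn n) (play_val (Gn n) \<sigma> ?\<tau> (A i)) = fst (L (xx n) n \<sigma> i)"
    using rA gA IH step by (auto simp: L_step weight_addA)
  have wB: "weight (Gn n) (play_val (Gn n) \<sigma> ?\<tau> (B i)) = snd (L (xx n) n \<sigma> i)"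
    using rB IH step tB by (auto simp: L_step weight_addB min_def)
  show ?case using wA wB step by simp
qed

lemma val_weight:
  assumes "S0 \<in> counter_plays G \<sigma> v" "\<forall>S\<in>counter_plays G \<sigma> v. weight G S0 \<le> weight G S"
  shows "weight G (val G \<sigma> v) = weight G S0"
proof -
  have ex: "\<exists>S. S \<in> counter_plays G \<sigma> v \<and> (\<forall>S'\<in>counter_plays G \<sigma> v. \<not> mless G S' S)"
    using assms by (auto simp: mless_def intro!: exI[of _ S0])
  have "val G \<sigma> v \<in> counter_plays G \<sigma> v \<and> (\<forall>S'\<in>counter_plays G \<sigma> v. \<not> mless G S' (val G \<sigma> v))"
    unfolding val_def by (rule someI_ex[OF ex])
  thus ?thesis using assms by (force simp: mless_def)
qed

lemma val_L:
  assumes g: "good n \<sigma>" and i: "1 \<le> i" "i \<le> Suc n"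
  shows "weight (Gn n) (val (Gn n) \<sigma> (an n i)) = fst (L (xx n) n \<sigma> i)
     \<and> weight (Gn n) (val (Gn n) \<sigma> (B i)) = snd (L (xx n) n \<sigma> i)"
proof -
  have pe: "weight (Gn n) (play_val (Gn n) \<sigma> (tstar n \<sigma>) (an n i)) = fst (L (xx n) n \<sigma> i)"
      "weight (Gn n) (play_val (Gn n) \<sigma> (tstar n \<sigma>) (B i)) = snd (L (xx n) n \<sigma> i)"
    using plays_eq[OF g i] by auto
  have rs: "reaches_sink (Gn n) \<sigma> (tstar n \<sigma>) (an n i)" "reaches_sink (Gn n) \<sigma> (tstar n \<sigma>) (B i)"
    using plays_ge[OF g tstar_str i] by auto
  have "weight (Gn n) (val (Gn n) \<sigma> (an n i)) = weight (Gn n) (play_val (Gn n) \<sigma> (tstar n \<sigma>) (an n i))"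
    apply (rule val_weight)
    using rs tstar_str pe plays_ge[OF g _ i] by (auto simp: counter_plays_def)
  moreover have "weight (Gn n) (val (Gn n) \<sigma> (B i)) = weight (Gn n) (play_val (Gn n) \<sigma> (tstar n \<sigma>) (B i))"
    apply (rule val_weight)
    using rs tstar_str pe plays_ge[OF g _ i] by (auto simp: counter_plays_def)
  ultimately show ?thesis using pe by simp
qed


lemma L_prop:
  assumes "1 \<le> i" "i \<le> Suc n"
  shows "\<bar>fst (L (xx n) n \<sigma> i) - snd (L (xx n) n \<sigma> i)\<bar> \<ge> real (2*n+1) ^ (2*i+2)
    \<and> (fst (L (xx n) n \<sigma> i) > snd (L (xx n) n \<sigma> i) \<longleftrightarrow> cb n \<sigma> i)"
  using assms
proof (induction i rule: down_induct)
  case top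
  have e: "even (2*n+4::nat)" by simp
  have "xx n ^ (2 * n + 4) = real (2*n+1) ^ (2 * n + 4)"
    unfolding xx_def by (rule power_minus_even[OF e])
  also have "\<dots> = real (2*n+1) ^ (2 * Suc n + 2)" by (rule arg_cong[where f="\<lambda>k. real (2*n+1) ^ k"]) simp
  finally have "xx n ^ (2 * n + 4) = real (2*n+1) ^ (2 * Suc n + 2)" .
  moreover have pos: "real (2*n+1) ^ (2 * Suc n + 2) > 0" by (rule zero_less_power) simp
  ultimately show ?case unfolding L_top[OF lessI] cb_top[OF lessI] fst_conv snd_conv
    by (smt (verit))
next
  case (step i)
  define N where "N = real (2*n+1)"
  define t where "t = N ^ (2*i+1)"
  define a' where "a' = fst (L (xx n) n \<sigma> (Suc i))"
  define b' where "b' = snd (L (xx n) n \<sigma> (Suc i))"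
  have N3: "N \<ge> 3" using step by (simp add: N_def)
  have t0: "t > 0" using N3 by (simp add: t_def)
  have x1: "xx n ^ (2*i+1) = - t" unfolding xx_def t_def N_def by (rule power_minus_odd) simp
  have x2: "xx n ^ (2*i+2) = N * t" unfolding xx_def t_def N_def
    by (subst power_minus_even) (simp_all add: power_Suc[symmetric] del: power_Suc)
  have n2: "N ^ (2*i+2) = N * t" by (simp add: t_def)
  have n4: "N ^ (2 * Suc i + 2) = N^3 * t" unfolding t_def power_add[symmetric] by (rule arg_cong[where f="\<lambda>k. N ^ k"]) simp
  have cube: "N^3 \<ge> 2*N+1"
  proof -
    have "N*N \<ge> 3*3" using N3 by (metis mult_mono' le_numeral_extra(3) order_trans zero_le_numeral)
    hence "N*N*N \<ge> 9 * N" using N3 by (simp add: mult_right_mono)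
    thus ?thesis unfolding power3_eq_cube using N3 by linarith
  qed
  have big0: "N^3 * t \<ge> (2*N+1) * t" using cube t0 by (simp add: mult_right_mono)
  have big: "N^3 * t \<ge> 2 * (N * t) + t" using big0 by (simp add: algebra_simps)
  have Nt: "N * t > 0" using N3 t0 by simp
  have IH: "\<bar>a' - b'\<bar> \<ge> N^3 * t" "(a' > b') = cb n \<sigma> (Suc i)"
    using step.IH n4 by (auto simp: a'_def b'_def N_def)
  have Lf: "fst (L (xx n) n \<sigma> i) = - t + (if \<sigma> (A i) = B (Suc i) then b' else a')"
    and Ls: "snd (L (xx n) n \<sigma> i) = N * t + min a' b'"
    using step x1 x2 by (simp_all add: L_step a'_def b'_def)
  have cbi: "cb n \<sigma> i = ((\<sigma> (A i) = B (Suc i)) \<noteq> cb n \<sigma> (Suc i))" using step by (simp add: cb_step)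
  show ?case
    unfolding Lf Ls cbi N_def[symmetric] n2 IH(2)[symmetric]
    using IH(1) big t0 Nt by (cases "\<sigma> (A i) = B (Suc i)"; cases "a' > b'"; simp add: min_def abs_if; linarith)
qed

definition other :: "nat \<Rightarrow> (vtx \<Rightarrow> vtx) \<Rightarrow> nat \<Rightarrow> vtx" where
  "other n \<sigma> i = (if \<sigma> (A i) = B (Suc i) then an n (Suc i) else B (Suc i))"

lemma imp_char:
  assumes g: "good n \<sigma>" and ad: "admissible (Gn n) \<sigma>"
  shows "improving_switch (Gn n) \<sigma> v w \<longleftrightarrow>
    (\<exists>i. 1 \<le> i \<and> i \<le> n \<and> v = A i \<and> w = other n \<sigma> i \<and> \<not> cb n \<sigma> i)"
proof
  assume H: "improving_switch (Gn n) \<sigma> v w"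
  then obtain i where v: "v = A i" "1 \<le> i" "i \<le> n" by (auto simp: improving_switch_def Gn_def)
  have w: "w = an n (Suc i) \<or> w = B (Suc i)" using H v by (auto simp: improving_switch_def edgesA)
  have gA: "\<sigma> (A i) = an n (Suc i) \<or> \<sigma> (A i) = B (Suc i)" using g v by (simp add: good_def)
  have V: "weight (Gn n) (val (Gn n) \<sigma> (an n (Suc i))) = fst (L (xx n) n \<sigma> (Suc i))"
    "weight (Gn n) (val (Gn n) \<sigma> (B (Suc i))) = snd (L (xx n) n \<sigma> (Suc i))"
    using val_L[OF g, of "Suc i"] v by auto
  have P: "(fst (L (xx n) n \<sigma> (Suc i)) > snd (L (xx n) n \<sigma> (Suc i))) = cb n \<sigma> (Suc i)"
    using L_prop[of "Suc i" n \<sigma>] v by auto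
  have cbi: "cb n \<sigma> i = ((\<sigma> (A i) = B (Suc i)) \<noteq> cb n \<sigma> (Suc i))" using v by (simp add: cb_step)
  have m: "weight (Gn n) (val (Gn n) \<sigma> (\<sigma> (A i))) < weight (Gn n) (val (Gn n) \<sigma> w)"
    using H v by (simp add: improving_switch_def mless_def)
  show "\<exists>i. 1 \<le> i \<and> i \<le> n \<and> v = A i \<and> w = other n \<sigma> i \<and> \<not> cb n \<sigma> i"
    using m w gA V P cbi v by (auto simp: other_def)
next
  assume "\<exists>i. 1 \<le> i \<and> i \<le> n \<and> v = A i \<and> w = other n \<sigma> i \<and> \<not> cb n \<sigma> i"
  then obtain i where v: "v = A i" "1 \<le> i" "i \<le> n" "w = other n \<sigma> i" "\<not> cb n \<sigma> i" by blast
  have gA: "\<sigma> (A i) = an n (Suc i) \<or> \<sigma> (A i) = B (Suc i)" using g v by (simp add: good_def)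
  have V: "weight (Gn n) (val (Gn n) \<sigma> (an n (Suc i))) = fst (L (xx n) n \<sigma> (Suc i))"
    "weight (Gn n) (val (Gn n) \<sigma> (B (Suc i))) = snd (L (xx n) n \<sigma> (Suc i))"
    using val_L[OF g, of "Suc i"] v by auto
  have P: "(fst (L (xx n) n \<sigma> (Suc i)) > snd (L (xx n) n \<sigma> (Suc i))) = cb n \<sigma> (Suc i)"
    "\<bar>fst (L (xx n) n \<sigma> (Suc i)) - snd (L (xx n) n \<sigma> (Suc i))\<bar> > 0"
  proof -
    have s1: "1 \<le> Suc i" "Suc i \<le> Suc n" using v by auto
    note h = L_prop[OF s1, of \<sigma>]
    have "real (2*n+1) ^ (2 * Suc i + 2) > 0" by (rule zero_less_power) simp
    thus "(fst (L (xx n) n \<sigma> (Suc i)) > snd (L (xx n) n \<sigma> (Suc i))) = cb n \<sigma> (Suc i)"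
      "\<bar>fst (L (xx n) n \<sigma> (Suc i)) - snd (L (xx n) n \<sigma> (Suc i))\<bar> > 0"
      using h[THEN conjunct1] h[THEN conjunct2] by linarith+
  qed
  have cbi: "cb n \<sigma> i = ((\<sigma> (A i) = B (Suc i)) \<noteq> cb n \<sigma> (Suc i))" using v by (simp add: cb_step)
  have m: "weight (Gn n) (val (Gn n) \<sigma> (\<sigma> (A i))) < weight (Gn n) (val (Gn n) \<sigma> w)"
    using gA V P cbi v by (auto simp: other_def)
  have e: "(A i, w) \<in> edges (Gn n)" using v by (auto simp: edgesA other_def)
  show "improving_switch (Gn n) \<sigma> v w" using m e v ad
    by (simp add: improving_switch_def mless_def Gn_def)
qed

lemma c1:
  assumes g: "good n \<sigma>" and "1 \<le> n"
  shows "mless (Gn n) (val (Gn n) \<sigma> (B 1)) (val (Gn n) \<sigma> (an n 1)) = cb n \<sigma> 1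
    \<and> mless (Gn n) (val (Gn n) \<sigma> (an n 1)) (val (Gn n) \<sigma> (B 1)) = (\<not> cb n \<sigma> 1)"
proof -
  have V: "weight (Gn n) (val (Gn n) \<sigma> (an n 1)) = fst (L (xx n) n \<sigma> 1)"
    "weight (Gn n) (val (Gn n) \<sigma> (B 1)) = snd (L (xx n) n \<sigma> 1)"
    using val_L[OF g, of 1] by auto
  have P: "(fst (L (xx n) n \<sigma> 1) > snd (L (xx n) n \<sigma> 1)) = cb n \<sigma> 1"
    "\<bar>fst (L (xx n) n \<sigma> 1) - snd (L (xx n) n \<sigma> 1)\<bar> > 0"
    using L_prop[of 1 n \<sigma>] by (auto intro: less_le_trans[rotated])
  show ?thesis using V P by (auto simp: mless_def)
qed


definition sk :: "nat \<Rightarrow> nat \<Rightarrow> vtx \<Rightarrow> vtx" where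
  "sk n k v = (case v of A i \<Rightarrow> if 1 \<le> i \<and> i \<le> n \<and> (bit k (i-1) \<noteq> bit k i) then B (Suc i) else an n (Suc i)
     | _ \<Rightarrow> Top)"

lemma sk0: "sk n 0 = sigma0 n"
  by (rule ext, case_tac x) (auto simp: sk_def sigma0_def)

lemma good_sk: "good n (sk n k)" by (auto simp: good_def sk_def)

lemma str_sk: "strategy0 (Gn n) (sk n k)"
proof -
  have "V0 (Gn n) = A ` {1..n}" by (simp add: Gn_def)
  thus ?thesis unfolding strategy0_def by (auto simp: edgesA sk_def)
qed

lemma adm_sk: "admissible (Gn n) (sk n k)" by (rule admissible_Gn[OF str_sk])

lemma bit_hi: "k < 2 ^ n \<Longrightarrow> n \<le> j \<Longrightarrow> \<not> bit (k::nat) j"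
proof -
  assume "k < 2 ^ n" "n \<le> j"
  hence "k < 2 ^ j" using order_less_le_trans[OF _ power_increasing[of n j "2::nat"]] by simp
  thus ?thesis by (simp add: bit_iff_odd)
qed

lemma cb_sk:
  assumes k: "k < 2 ^ n" and i: "1 \<le> i" "i \<le> Suc n"
  shows "cb n (sk n k) i = bit k (i - 1)"
  using i
proof (induction i rule: down_induct)
  case top then show ?case using bit_hi[OF k] by (simp add: cb_top)
next
  case (step i)
  then show ?case by (auto simp: cb_step sk_def)
qed

lemma imp_sk:
  assumes k: "k < 2 ^ n"
  shows "improving_switch (Gn n) (sk n k) v w \<longleftrightarrow>
    (\<exists>i. 1 \<le> i \<and> i \<le> n \<and> v = A i \<and> w = other n (sk n k) i \<and> \<not> bit k (i - 1))"
  unfolding imp_char[OF good_sk adm_sk]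
  using cb_sk[OF k] by (metis le_SucI)

lemma bit_inc:
  fixes k :: nat
  assumes "\<forall>j<t. bit k j" "\<not> bit k t"
  shows "bit (Suc k) j \<longleftrightarrow> (j = t \<or> (t < j \<and> bit k j))"
  using assms
proof (induction t arbitrary: k j)
  case 0
  hence ev: "even k" by (simp add: bit_0)
  show ?case
  proof (cases j)
    case 0 then show ?thesis using ev by (simp add: bit_0)
  next
    case (Suc j')
    have "Suc k div 2 = k div 2" using ev by presburger
    then show ?thesis using Suc by (simp add: bit_Suc)
  qed
next
  case (Suc t)
  have od: "odd k" using Suc.prems(1) by (auto simp: bit_0)
  have h1: "\<forall>j<t. bit (k div 2) j" using Suc.prems(1) by (auto simp: bit_Suc[symmetric])
  have h2: "\<not> bit (k div 2) t" using Suc.prems(2) by (simp add: bit_Suc)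
  have d: "Suc k div 2 = Suc (k div 2)" using od by presburger
  show ?case
  proof (cases j)
    case 0 then show ?thesis using od by (simp add: bit_0)
  next
    case (Suc j')
    then show ?thesis using Suc.IH[OF h1 h2, of j'] d by (simp add: bit_Suc)
  qed
qed

lemma bit_mask_nat: "bit ((2::nat) ^ n - 1) j \<longleftrightarrow> j < n"
  using bit_mask_iff[of n j, where 'a=nat] by (simp add: mask_eq_exp_minus_1)

lemma all_ones:
  fixes k :: nat
  assumes "k < 2 ^ n" "\<forall>j<n. bit k j"
  shows "k = 2 ^ n - 1"
proof (rule bit_eqI)
  fix j
  have m: "bit ((2::nat) ^ n - 1) j \<longleftrightarrow> j < n"
    by (rule bit_mask_nat)
  show "bit k j \<longleftrightarrow> bit ((2::nat) ^ n - 1) j"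
    using m assms bit_hi[OF assms(1), of j] by (cases "j < n") auto
qed

lemma bl_bounds: "2 * i - 1 \<le> blandn n (A i, w) \<and> blandn n (A i, w) \<le> 2 * i"
  by (simp add: blandn_def)

lemma exists_zero:
  fixes k :: nat
  assumes "k < 2 ^ n - 1"
  shows "\<exists>j<n. \<not> bit k j"
  using all_ones[of k n] assms by fastforce

lemma sk_upd:
  assumes k: "k < 2 ^ n - 1" and t: "t = (LEAST j. \<not> bit k j)"
  shows "t < n" "(sk n k)(A (Suc t) := other n (sk n k) (Suc t)) = sk n (Suc k)"
proof -
  obtain j where j: "j < n" "\<not> bit k j" using exists_zero[OF k] by blast
  have tz: "\<not> bit k t" using t j by (metis (mono_tags) LeastI)
  have tl: "\<forall>j<t. bit k j" using t not_less_Least by blast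
  show "t < n" using t j Least_le[of "\<lambda>j. \<not> bit k j" j] by simp
  have bi: "\<And>j. bit (Suc k) j \<longleftrightarrow> (j = t \<or> (t < j \<and> bit k j))" using bit_inc[OF tl tz] .
  show "(sk n k)(A (Suc t) := other n (sk n k) (Suc t)) = sk n (Suc k)"
  proof (rule ext)
    fix v show "((sk n k)(A (Suc t) := other n (sk n k) (Suc t))) v = sk n (Suc k) v"
    proof (cases v)
      case (A i)
      show ?thesis
      proof (cases "i = Suc t")
        case True
        then show ?thesis using A bi tz \<open>t < n\<close> by (auto simp: sk_def other_def)
      next
        case False
        have "(bit k (i-1) \<noteq> bit k i) = (bit (Suc k) (i-1) \<noteq> bit (Suc k) i)" if "1 \<le> i"
          using bi tl tz False that by (cases "i < t"; cases "i = t"; auto)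
        then show ?thesis using A False by (auto simp: sk_def)
      qed
    qed (auto simp: sk_def)
  qed
qed

lemma aux1: "Suc (Suc t) \<le> i \<Longrightarrow> 2 * i - 1 \<le> (b::nat) \<Longrightarrow> a \<le> 2 * Suc t \<Longrightarrow> a \<le> b"
  by presburger
lemma aux2: "Suc t \<le> i \<Longrightarrow> (b::nat) \<le> a \<Longrightarrow> 2 * i - 1 \<le> b \<Longrightarrow> a \<le> 2 * Suc t \<Longrightarrow> i = Suc t"
  by presburger

lemma bland_sk:
  assumes k: "k < 2 ^ n - 1"
  shows "bland_step (Gn n) (blandn n) (sk n k) \<sigma>' \<longleftrightarrow> \<sigma>' = sk n (Suc k)"
proof -
  define t where "t = (LEAST j. \<not> bit k j)"
  have tn: "t < n" and upd: "(sk n k)(A (Suc t) := other n (sk n k) (Suc t)) = sk n (Suc k)"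
    using sk_upd[OF k t_def] by auto
  have k2: "k < 2 ^ n" using k by simp
  have tz: "\<not> bit k t" using exists_zero[OF k] t_def by (metis (mono_tags) LeastI)
  have tmin: "\<And>i. \<not> bit k (i - 1) \<Longrightarrow> t \<le> i - 1" using t_def by (simp add: Least_le)
  have I: "improving_switch (Gn n) (sk n k) (A (Suc t)) (other n (sk n k) (Suc t))"
    using imp_sk[OF k2] tn tz by auto
  have M: "blandn n (A (Suc t), other n (sk n k) (Suc t)) \<le> blandn n (v', w')"
    if "improving_switch (Gn n) (sk n k) v' w'" for v' w'
  proof -
    from that[unfolded imp_sk[OF k2]] obtain i where i: "1 \<le> i" "v' = A i" "w' = other n (sk n k) i" "\<not> bit k (i - 1)"
      by blast
    have "t \<le> i - 1" by (rule tmin[OF i(4)])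
    hence st: "Suc t \<le> i" using i(1) by linarith
    show ?thesis unfolding i(2) i(3)
    proof (cases "i = Suc t")
      case True thus "blandn n (A (Suc t), other n (sk n k) (Suc t)) \<le> blandn n (A i, other n (sk n k) i)" by simp
    next
      case False
      hence "Suc (Suc t) \<le> i" using st by linarith
      moreover have "2 * i - 1 \<le> blandn n (A i, other n (sk n k) i)" "blandn n (A (Suc t), other n (sk n k) (Suc t)) \<le> 2 * Suc t"
        using bl_bounds[of "Suc t" n "other n (sk n k) (Suc t)"] bl_bounds[of i n "other n (sk n k) i"] by auto
      ultimately show "blandn n (A (Suc t), other n (sk n k) (Suc t)) \<le> blandn n (A i, other n (sk n k) i)" by (rule aux1)
    qed
  qed
  show ?thesis
  proof
    assume "bland_step (Gn n) (blandn n) (sk n k) \<sigma>'"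
    then obtain v w where vw: "improving_switch (Gn n) (sk n k) v w"
      "\<forall>v' w'. improving_switch (Gn n) (sk n k) v' w' \<longrightarrow> blandn n (v, w) \<le> blandn n (v', w')"
      "\<sigma>' = (sk n k)(v := w)" unfolding bland_step_def by blast
    from vw(1)[unfolded imp_sk[OF k2]] obtain i where i: "1 \<le> i" "v = A i" "w = other n (sk n k) i" "\<not> bit k (i - 1)"
      by blast
    have "t \<le> i - 1" by (rule tmin[OF i(4)])
    hence "Suc t \<le> i" using i(1) by linarith
    moreover have "blandn n (v, w) \<le> blandn n (A (Suc t), other n (sk n k) (Suc t))" using vw(2)[rule_format, OF I] .
    moreover have "2 * i - 1 \<le> blandn n (v, w)" "blandn n (A (Suc t), other n (sk n k) (Suc t)) \<le> 2 * Suc t"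
        using bl_bounds[of "Suc t" n "other n (sk n k) (Suc t)"] bl_bounds[of i n w] i(2) by auto
    ultimately have "i = Suc t" by (rule aux2)
    hence "\<sigma>' = (sk n k)(A (Suc t) := other n (sk n k) (Suc t))" using vw(3) i(2) i(3) by simp
    thus "\<sigma>' = sk n (Suc k)" using upd by simp
  next
    assume s': "\<sigma>' = sk n (Suc k)"
    show "bland_step (Gn n) (blandn n) (sk n k) \<sigma>'"
      unfolding bland_step_def
    proof (intro exI conjI allI impI)
      show "improving_switch (Gn n) (sk n k) (A (Suc t)) (other n (sk n k) (Suc t))" by (rule I)
    next
      fix v' w' assume "improving_switch (Gn n) (sk n k) v' w'"
      thus "blandn n (A (Suc t), other n (sk n k) (Suc t)) \<le> blandn n (v', w')" by (rule M)
    next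
      show "\<sigma>' = (sk n k)(A (Suc t) := other n (sk n k) (Suc t))" using s' upd by simp
    qed
  qed
qed

lemma opt_sk: "optimal (Gn n) (sk n (2 ^ n - 1))"
proof -
  have k: "(2::nat) ^ n - 1 < 2 ^ n" by simp
  have m: "\<And>j. bit ((2::nat) ^ n - 1) j \<longleftrightarrow> j < n"
    by (rule bit_mask_nat)
  show ?thesis unfolding optimal_def
  proof
    assume "\<exists>v w. improving_switch (Gn n) (sk n (2 ^ n - 1)) v w"
    then obtain v w where "improving_switch (Gn n) (sk n (2 ^ n - 1)) v w" by blast
    then obtain i where i: "1 \<le> i" "i \<le> n" "\<not> bit ((2::nat) ^ n - 1) (i - 1)"
      unfolding imp_sk[OF k] by blast
    have "i - 1 < n" using i by linarith
    thus False using i(3) m by blast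
  qed
qed

lemma nonopt_sk: assumes "k < 2 ^ n - 1" shows "\<not> optimal (Gn n) (sk n k)"
proof -
  have "bland_step (Gn n) (blandn n) (sk n k) (sk n (Suc k))" using bland_sk[OF assms] by simp
  then obtain v w where "improving_switch (Gn n) (sk n k) v w" unfolding bland_step_def by blast
  thus ?thesis unfolding optimal_def by blast
qed


theorem lemma15:
  fixes n :: nat
  shows "(\<exists>\<sigma>s. bland_run (Gn n) (blandn n) (sigma0 n) (2 ^ n - 1) \<sigma>s \<and>
            (\<forall>k < 2 ^ n - 1.
               (mless (Gn n) (val (Gn n) (\<sigma>s k) (an n 1)) (val (Gn n) (\<sigma>s k) (B 1)) \<and>
                mless (Gn n) (val (Gn n) (\<sigma>s (Suc k)) (B 1)) (val (Gn n) (\<sigma>s (Suc k)) (an n 1)))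
             \<or> (mless (Gn n) (val (Gn n) (\<sigma>s k) (B 1)) (val (Gn n) (\<sigma>s k) (an n 1)) \<and>
                mless (Gn n) (val (Gn n) (\<sigma>s (Suc k)) (an n 1)) (val (Gn n) (\<sigma>s (Suc k)) (B 1)))))
         \<and> (\<forall>m \<sigma>s. bland_run (Gn n) (blandn n) (sigma0 n) m \<sigma>s \<longrightarrow> m = 2 ^ n - 1)"
proof (intro conjI allI impI)
  let ?s = "\<lambda>k. sk n k"
  have run: "bland_run (Gn n) (blandn n) (sigma0 n) (2 ^ n - 1) ?s"
    unfolding bland_run_def using sk0 adm_sk bland_sk opt_sk by simp
  have alt: "\<forall>k < 2 ^ n - 1.
               (mless (Gn n) (val (Gn n) (?s k) (an n 1)) (val (Gn n) (?s k) (B 1)) \<and>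
                mless (Gn n) (val (Gn n) (?s (Suc k)) (B 1)) (val (Gn n) (?s (Suc k)) (an n 1)))
             \<or> (mless (Gn n) (val (Gn n) (?s k) (B 1)) (val (Gn n) (?s k) (an n 1)) \<and>
                mless (Gn n) (val (Gn n) (?s (Suc k)) (an n 1)) (val (Gn n) (?s (Suc k)) (B 1)))"
  proof (intro allI impI)
    fix k :: nat assume k: "k < 2 ^ n - 1"
    have n1: "1 \<le> n" using k by (cases n) auto
    have k1: "k < 2 ^ n" "Suc k < 2 ^ n" using k by auto
    have c0: "cb n (sk n k) 1 = odd k" using cb_sk[OF k1(1), of 1] by (simp add: bit_0)
    have c1': "cb n (sk n (Suc k)) 1 = odd (Suc k)" using cb_sk[OF k1(2), of 1] by (simp add: bit_0)
    note A0 = c1[OF good_sk[of n k] n1] and A1 = c1[OF good_sk[of n "Suc k"] n1]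
    show "(mless (Gn n) (val (Gn n) (?s k) (an n 1)) (val (Gn n) (?s k) (B 1)) \<and>
                mless (Gn n) (val (Gn n) (?s (Suc k)) (B 1)) (val (Gn n) (?s (Suc k)) (an n 1)))
             \<or> (mless (Gn n) (val (Gn n) (?s k) (B 1)) (val (Gn n) (?s k) (an n 1)) \<and>
                mless (Gn n) (val (Gn n) (?s (Suc k)) (an n 1)) (val (Gn n) (?s (Suc k)) (B 1)))"
      using A0 A1 c0 c1' by auto
  qed
  show "\<exists>\<sigma>s. bland_run (Gn n) (blandn n) (sigma0 n) (2 ^ n - 1) \<sigma>s \<and>
            (\<forall>k < 2 ^ n - 1.
               (mless (Gn n) (val (Gn n) (\<sigma>s k) (an n 1)) (val (Gn n) (\<sigma>s k) (B 1)) \<and>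
                mless (Gn n) (val (Gn n) (\<sigma>s (Suc k)) (B 1)) (val (Gn n) (\<sigma>s (Suc k)) (an n 1)))
             \<or> (mless (Gn n) (val (Gn n) (\<sigma>s k) (B 1)) (val (Gn n) (\<sigma>s k) (an n 1)) \<and>
                mless (Gn n) (val (Gn n) (\<sigma>s (Suc k)) (an n 1)) (val (Gn n) (\<sigma>s (Suc k)) (B 1))))"
    using run alt by blast
next
  fix m \<sigma>s assume R: "bland_run (Gn n) (blandn n) (sigma0 n) m \<sigma>s"
  have eq: "k \<le> m \<Longrightarrow> k \<le> 2 ^ n - 1 \<Longrightarrow> \<sigma>s k = sk n k" for k
  proof (induction k)
    case 0 then show ?case using R sk0 by (simp add: bland_run_def)
  next
    case (Suc k)
    have "bland_step (Gn n) (blandn n) (\<sigma>s k) (\<sigma>s (Suc k))" using R Suc.prems by (simp add: bland_run_def)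
    moreover have "\<sigma>s k = sk n k" using Suc by simp
    moreover have "k < 2 ^ n - 1" using Suc.prems by simp
    ultimately show ?case using bland_sk by simp
  qed
  show "m = 2 ^ n - 1"
  proof (rule ccontr)
    assume ne: "m \<noteq> 2 ^ n - 1"
    show False
    proof (cases "m < 2 ^ n - 1")
      case True
      have "optimal (Gn n) (\<sigma>s m)" using R by (simp add: bland_run_def)
      thus False using eq[of m] True nonopt_sk[OF True] by simp
    next
      case False
      hence lt: "2 ^ n - 1 < m" using ne by simp
      have "bland_step (Gn n) (blandn n) (\<sigma>s (2 ^ n - 1)) (\<sigma>s (Suc (2 ^ n - 1)))"
        using R lt unfolding bland_run_def by blast
      moreover have "\<sigma>s (2 ^ n - 1) = sk n (2 ^ n - 1)" using eq lt by simp
      ultimately obtain v w where "improving_switch (Gn n) (sk n (2 ^ n - 1)) v w"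
        unfolding bland_step_def by auto
      thus False using opt_sk unfolding optimal_def by blast
    qed
  qed
qed

end
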